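(* Let $P$ be a finite poset and $I\in\mathcal{IC}(P)$. Then \[ \mathrm{Row}(I)=\mathrm{Inc}(I)\ \cup\ \Big(\Delta\big(\mathrm{Inc}_I(\lceil I\rceil)\big)-\big(I\cup\Delta(\lceil I\rceil)\big)\Big)\ \cup\ \Big(\Delta(\lceil I\rceil)-\Delta\big(\mathrm{Min}(I)\cap\Delta(\lceil I\rceil)\big)\Big). \]
   Context: All posets are finite. For a poset $P$, a subset $I\subseteq P$ is interval-closed if for all $x,y\in I$ and $z\in P$ with $x\le z\le y$ we have $z\in I$; $\mathcal{IC}(P)$ is the set of interval-closed subsets of $P$. For $x\in P$ the toggle $t_x:\mathcal{IC}(P)\to\mathcal{IC}(P)$ is defined by $t_x(I)=I\triangle\{x\}$ if $I\triangle\{x\}\in\mathcal{IC}(P)$ and $t_x(I)=I$ otherwise. Rowmotion is $\mathrm{Row}=t_{x_1}\circ t_{x_2}\circ\cdots\circ t_{x_N}:\mathcal{IC}(P)\to\mathcal{IC}(P)$, where $(x_1,\dots,x_N)$ is a linear extension of $P$ (so elements are toggled from the top of the poset down); this does not depend on the choice of linear extension. For $S\subseteq P$: $\Delta(S)$ is the smallest order ideal containing $S$ and $\nabla(S)$ the smallest order filter containing $S$ (both empty if $S=\emptyset$); $\mathrm{Inc}(S)=P-(\Delta(S)\cup\nabla(S))$ is the set of elements incomparable to every element of $S$; for $J\subseteq P$, $\mathrm{Inc}_J(S)=J\cap\mathrm{Inc}(S)$. $\mathrm{Min}(S)$ denotes the set of minimal elements of $S$ (in the induced order). The ceiling of $I\in\mathcal{IC}(P)$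 is $\lceil I\rceil=\mathrm{Min}(\nabla(I)-I)$. Set differences are written with $-$. *)

theory Defs
  imports Main
begin

text \<open>The finite poset P is the universe of a type of class order and finite.\<close>

definition interval_closed :: "('a::order) set \<Rightarrow> bool" where
  "interval_closed I \<longleftrightarrow> (\<forall>x\<in>I. \<forall>y\<in>I. \<forall>z. x \<le> z \<and> z \<le> y \<longrightarrow> z \<in> I)"

definition IC :: "('a::order) set set" where
  "IC = {I. interval_closed I}"

definition toggle :: "'a::order \<Rightarrow> 'a set \<Rightarrow> 'a set" where
  "toggle x I = (let J = (I - {x}) \<union> ({x} - I) in if J \<in> IC then J else I)"

definition linear_extension :: "('a::{order,finite}) list \<Rightarrow> bool" where
  "linear_extension xs \<longleftrightarrow> distinct xs \<and> set xs = UNIV \<and>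
     (\<forall>i<length xs. \<forall>j<length xs. xs ! i < xs ! j \<longrightarrow> i < j)"

text \<open>Row = t_{x1} o t_{x2} o ... o t_{xN} (so t_{xN} is applied first).\<close>
definition rowmotion :: "('a::{order,finite}) set \<Rightarrow> 'a set" where
  "rowmotion I = foldr toggle (SOME xs. linear_extension xs) I"

definition down_closure :: "('a::order) set \<Rightarrow> 'a set" where
  "down_closure S = {y. \<exists>x\<in>S. y \<le> x}"

definition up_closure :: "('a::order) set \<Rightarrow> 'a set" where
  "up_closure S = {y. \<exists>x\<in>S. x \<le> y}"

definition Inc :: "('a::order) set \<Rightarrow> 'a set" where
  "Inc S = UNIV - (down_closure S \<union> up_closure S)"

definition Inc_in :: "('a::order) set \<Rightarrow> 'a set \<Rightarrow> 'a set" where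
  "Inc_in J S = J \<inter> Inc S"

definition minimals :: "('a::order) set \<Rightarrow> 'a set" where
  "minimals S = {x\<in>S. \<not> (\<exists>y\<in>S. y < x)}"

definition ceiling_ic :: "('a::order) set \<Rightarrow> 'a set" where
  "ceiling_ic I = minimals (up_closure I - I)"

end

theory Submission
  imports Defs
begin

definition Rset :: "('a::order) set \<Rightarrow> 'a set" where
 "Rset I = Inc I
    \<union> (down_closure (Inc_in I (ceiling_ic I)) - (I \<union> down_closure (ceiling_ic I)))
    \<union> (down_closure (ceiling_ic I) - down_closure (minimals I \<inter> down_closure (ceiling_ic I)))"

lemma ceil_mem: "c \<in> ceiling_ic I \<longleftrightarrow> (\<exists>i\<in>I. i \<le> c) \<and> c \<notin> I \<and> \<not> (\<exists>y. (\<exists>i\<in>I. i \<le> y) \<and> y \<notin> I \<and> y < c)"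
  unfolding ceiling_ic_def minimals_def up_closure_def by auto

lemma Ra: assumes ic: "interval_closed I" and x: "x \<in> I"
  shows "x \<in> Rset I \<longleftrightarrow> (\<exists>c\<in>ceiling_ic I. x \<le> c) \<and> (\<exists>a\<in>I. a < x)"
proof -
  have n1: "x \<notin> Inc I" using x unfolding Inc_def down_closure_def by auto
  have m: "x \<in> down_closure (minimals I \<inter> down_closure (ceiling_ic I)) \<longleftrightarrow>
      x \<in> minimals I \<and> x \<in> down_closure (ceiling_ic I)"
  proof
    assume "x \<in> down_closure (minimals I \<inter> down_closure (ceiling_ic I))"
    then obtain m where m: "m \<in> minimals I" "m \<in> down_closure (ceiling_ic I)" "x \<le> m"
      unfolding down_closure_def by auto
    then have "x = m" using x unfolding minimals_def by (auto simp: order_le_less)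
    then show "x \<in> minimals I \<and> x \<in> down_closure (ceiling_ic I)" using m by simp
  next
    assume "x \<in> minimals I \<and> x \<in> down_closure (ceiling_ic I)"
    then show "x \<in> down_closure (minimals I \<inter> down_closure (ceiling_ic I))"
      unfolding down_closure_def by auto
  qed
  have "x \<in> Rset I \<longleftrightarrow> x \<in> down_closure (ceiling_ic I) \<and> x \<notin> minimals I"
    using n1 m x unfolding Rset_def by auto
  then show ?thesis using x unfolding down_closure_def minimals_def by auto
qed

lemma Rb: "x \<notin> down_closure I \<Longrightarrow> x \<notin> up_closure I \<Longrightarrow> x \<in> Rset I"
  unfolding Rset_def Inc_def by auto

lemma Rc: assumes ic: "interval_closed I" and x: "x \<in> up_closure I" "x \<notin> I"
  shows "x \<in> Rset I \<longleftrightarrow> x \<in> ceiling_ic I"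
proof -
  have nd: "x \<notin> down_closure I" using assms unfolding interval_closed_def down_closure_def up_closure_def by blast
  show ?thesis
  proof
    assume "x \<in> Rset I"
    then have "x \<in> down_closure (ceiling_ic I)" using nd x
      unfolding Rset_def Inc_def Inc_in_def down_closure_def by auto
    then obtain c where c: "c \<in> ceiling_ic I" "x \<le> c" unfolding down_closure_def by auto
    have "\<not> x < c" using c(1) x unfolding ceil_mem up_closure_def by blast
    then have "x = c" using c(2) by (simp add: order_le_less)
    then show "x \<in> ceiling_ic I" using c by simp
  next
    assume "x \<in> ceiling_ic I"
    then show "x \<in> Rset I" using nd unfolding Rset_def down_closure_def minimals_def by auto
  qed
qed

lemma Rd: assumes ic: "interval_closed I" and x: "x \<in> down_closure I" "x \<notin> I"
  shows "x \<in> Rset I \<longleftrightarrow> x \<notin> down_closure (minimals I \<inter> down_closure (ceiling_ic I))"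
proof -
  have nu: "x \<notin> up_closure I" using assms unfolding interval_closed_def down_closure_def up_closure_def by blast
  have key: "x \<in> down_closure (Inc_in I (ceiling_ic I))" if "x \<notin> down_closure (ceiling_ic I)"
  proof -
    obtain i where i: "i \<in> I" "x \<le> i" using x unfolding down_closure_def by auto
    have "i \<in> Inc (ceiling_ic I)"
      unfolding Inc_def
    proof (auto simp: down_closure_def up_closure_def)
      fix c assume "c \<in> ceiling_ic I" "i \<le> c"
      then show False using that i unfolding down_closure_def using order_trans by blast
    next
      fix c assume c: "c \<in> ceiling_ic I" "c \<le> i"
      then obtain j where "j \<in> I" "j \<le> c" "c \<notin> I" unfolding ceil_mem by auto
      then show False using ic i c unfolding interval_closed_def by blast
    qed
    then show ?thesis using i unfolding down_closure_def Inc_in_def by auto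
  qed
  have sub: "down_closure (minimals I \<inter> down_closure (ceiling_ic I)) \<subseteq> down_closure (ceiling_ic I)"
    unfolding down_closure_def by (auto intro: order_trans)
  show ?thesis using key sub x nu unfolding Rset_def Inc_def by auto
qed

lemma ceil_in_R: assumes ic: "interval_closed I" and c: "c \<in> ceiling_ic I" shows "c \<in> Rset I"
  using Rc[OF ic] c unfolding ceil_mem up_closure_def by blast

lemma G1: assumes ic: "interval_closed I" and z: "z \<notin> down_closure I" and zb: "z \<le> b" and b: "b \<in> Rset I"
  shows "z \<in> Rset I"
proof (cases "z \<in> up_closure I")
  case False then show ?thesis using Rb z by blast
next
  case True
  have zI: "z \<notin> I" using z unfolding down_closure_def by auto
  have bu: "b \<in> up_closure I" using True zb unfolding up_closure_def using order_trans by blast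
  have bI: "b \<notin> I" using z zb unfolding down_closure_def by auto
  have "b \<in> ceiling_ic I" using Rc[OF ic bu bI] b by simp
  then have "z = b" using True zI zb unfolding ceil_mem up_closure_def by (auto simp: order_le_less)
  then show ?thesis using b by simp
qed

lemma propA: assumes ic: "interval_closed I" and x: "x \<in> I"
  shows "x \<in> Rset I \<longleftrightarrow> (\<exists>a\<in>I. a < x) \<and> (\<exists>b\<in>Rset I. x < b)"
proof -
  have "(\<exists>c\<in>ceiling_ic I. x \<le> c) \<longleftrightarrow> (\<exists>b\<in>Rset I. x < b)"
  proof
    assume "\<exists>c\<in>ceiling_ic I. x \<le> c"
    then obtain c where c: "c \<in> ceiling_ic I" "x \<le> c" by auto
    then have "x \<noteq> c" using x unfolding ceil_mem by auto
    then show "\<exists>b\<in>Rset I. x < b" using c ceil_in_R[OF ic c(1)] by (auto simp: order_le_less)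
  next
    assume "\<exists>b\<in>Rset I. x < b"
    then obtain b where b: "b \<in> Rset I" "x < b" by auto
    show "\<exists>c\<in>ceiling_ic I. x \<le> c"
    proof (cases "b \<in> I")
      case True
      then show ?thesis using Ra[OF ic True] b order_trans by (meson less_imp_le)
    next
      case False
      have "b \<in> up_closure I" using x b unfolding up_closure_def by (auto intro: less_imp_le)
      then have "b \<in> ceiling_ic I" using Rc[OF ic _ False] b by simp
      then show ?thesis using b by (auto intro: less_imp_le)
    qed
  qed
  then show ?thesis using Ra[OF ic x] by auto
qed

lemma propB: assumes ic: "interval_closed I" and x: "x \<notin> I"
  shows "x \<in> Rset I \<longleftrightarrow> \<not> (\<exists>z b. x < z \<and> z \<le> b \<and> b \<in> Rset I \<and> z \<notin> Rset I)
       \<and> \<not> (\<exists>a z. a \<le> z \<and> z < x \<and> a \<in> I \<and> z \<notin> I)"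
proof -
  let ?W = "\<exists>z b. x < z \<and> z \<le> b \<and> b \<in> Rset I \<and> z \<notin> Rset I"
  let ?Q = "\<exists>a z. a \<le> z \<and> z < x \<and> a \<in> I \<and> z \<notin> I"
  have Q: "?Q \<longleftrightarrow> x \<in> up_closure I \<and> x \<notin> ceiling_ic I"
  proof
    assume ?Q
    then obtain a z where az: "a \<le> z" "z < x" "a \<in> I" "z \<notin> I" by auto
    have "a \<le> x" using az(1,2) by (meson order_trans less_imp_le)
    then have "x \<in> up_closure I" unfolding up_closure_def using az(3) by auto
    moreover have "x \<notin> ceiling_ic I"
    proof
      assume "x \<in> ceiling_ic I"
      then have "\<not> ((\<exists>i\<in>I. i \<le> z) \<and> z \<notin> I \<and> z < x)" unfolding ceil_mem by blast
      then show False using az by blast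
    qed
    ultimately show "x \<in> up_closure I \<and> x \<notin> ceiling_ic I" by simp
  next
    assume a: "x \<in> up_closure I \<and> x \<notin> ceiling_ic I"
    then have xu: "\<exists>i\<in>I. i \<le> x" unfolding up_closure_def by simp
    have "\<exists>y. (\<exists>i\<in>I. i \<le> y) \<and> y \<notin> I \<and> y < x"
    proof (rule ccontr)
      assume "\<not> (\<exists>y. (\<exists>i\<in>I. i \<le> y) \<and> y \<notin> I \<and> y < x)"
      then have "x \<in> ceiling_ic I" using xu x unfolding ceil_mem by simp
      then show False using a by simp
    qed
    then obtain y i where y: "i \<in> I" "i \<le> y" "y \<notin> I" "y < x" by blast
    then show ?Q by blast
  qed
  have noW: "\<not> ?W" if nd: "x \<notin> down_closure I"
  proof
    assume ?W
    then obtain z b where zb: "x < z" "z \<le> b" "b \<in> Rset I" "z \<notin> Rset I" by auto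
    have "z \<notin> down_closure I"
    proof
      assume "z \<in> down_closure I"
      then obtain i where "i \<in> I" "z \<le> i" unfolding down_closure_def by auto
      moreover have "x \<le> i" using zb(1) \<open>z \<le> i\<close> by (meson order_trans less_imp_le)
      ultimately show False using nd unfolding down_closure_def by auto
    qed
    then show False using G1[OF ic _ zb(2,3)] zb(4) by simp
  qed
  show ?thesis
  proof (cases "x \<in> down_closure I")
    case False
    show ?thesis
    proof (cases "x \<in> up_closure I")
      case False
      have "x \<in> Rset I" using Rb[OF \<open>x \<notin> down_closure I\<close> False] .
      then show ?thesis using noW[OF \<open>x \<notin> down_closure I\<close>] Q False by simp
    next
      case True
      then show ?thesis using Rc[OF ic True x] noW[OF \<open>x \<notin> down_closure I\<close>] Q by simp
    qed
  next
    case True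
    let ?A = "\<lambda>y. y \<in> down_closure (minimals I \<inter> down_closure (ceiling_ic I))"
    have nu: "x \<notin> up_closure I" using True x ic unfolding interval_closed_def down_closure_def up_closure_def by blast
    have "?W \<longleftrightarrow> ?A x"
    proof
      assume ?W
      then obtain z b where zb: "x < z" "z \<le> b" "b \<in> Rset I" "z \<notin> Rset I" by auto
      have xz: "x \<le> z" using zb(1) by simp
      show "?A x"
      proof (cases "z \<in> I")
        case True
        have zD: "\<exists>c\<in>ceiling_ic I. z \<le> c"
        proof (cases "b \<in> I")
          case True
          then obtain c where c: "c \<in> ceiling_ic I" "b \<le> c" using Ra[OF ic True] zb(3) by auto
          have "z \<le> c" using zb(2) c(2) by (rule order_trans)
          then show ?thesis using c(1) by auto
        next
          case False
          have "b \<in> up_closure I" using \<open>z \<in> I\<close> zb(2) unfolding up_closure_def by auto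
          then have "b \<in> ceiling_ic I" using Rc[OF ic _ False] zb(3) by simp
          then show ?thesis using zb(2) by auto
        qed
        then have "\<not> (\<exists>a\<in>I. a < z)" using Ra[OF ic True] zb(4) by simp
        then have zm: "z \<in> minimals I" using True unfolding minimals_def by simp
        have "z \<in> down_closure (ceiling_ic I)" using zD unfolding down_closure_def by simp
        then have "z \<in> minimals I \<inter> down_closure (ceiling_ic I)" using zm by simp
        then show ?thesis using xz unfolding down_closure_def by auto
      next
        case False
        show ?thesis
        proof (cases "z \<in> down_closure I")
          case True
          then have "?A z" using Rd[OF ic True False] zb(4) by simp
          then obtain m where "m \<in> minimals I \<inter> down_closure (ceiling_ic I)" "z \<le> m"
            unfolding down_closure_def by auto
          moreover have "x \<le> m" using xz \<open>z \<le> m\<close> by (rule order_trans)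
          ultimately show ?thesis unfolding down_closure_def by auto
        next
          case False
          then show ?thesis using G1[OF ic False zb(2,3)] zb(4) by simp
        qed
      qed
    next
      assume "?A x"
      then obtain m where m: "m \<in> minimals I" "m \<in> down_closure (ceiling_ic I)" "x \<le> m"
        unfolding down_closure_def by auto
      then obtain c where c: "c \<in> ceiling_ic I" "m \<le> c" unfolding down_closure_def by auto
      have mI: "m \<in> I" using m unfolding minimals_def by auto
      have "m \<notin> Rset I" using Ra[OF ic mI] m(1) unfolding minimals_def by auto
      moreover have "x < m" using m(3) mI x by (auto simp: order_le_less)
      moreover have "c \<in> Rset I" using ceil_in_R[OF ic c(1)] .
      ultimately show ?W using c(2) by blast
    qed
    then show ?thesis using Rd[OF ic True x] Q nu by simp
  qed
qed

lemma step:
  fixes R :: "('a::order) set"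
  assumes xT: "x \<notin> T" and up: "\<forall>y. x < y \<longrightarrow> y \<in> T" and dn: "\<forall>y\<in>T. \<not> y < x"
    and S: "S = (R \<inter> T) \<union> (I - T)" and SIC: "S \<in> IC"
    and pA: "x \<in> I \<Longrightarrow> x \<in> R \<longleftrightarrow> (\<exists>a\<in>I. a < x) \<and> (\<exists>b\<in>R. x < b)"
    and pB: "x \<notin> I \<Longrightarrow> x \<in> R \<longleftrightarrow> \<not> (\<exists>z b. x < z \<and> z \<le> b \<and> b \<in> R \<and> z \<notin> R)
       \<and> \<not> (\<exists>a z. a \<le> z \<and> z < x \<and> a \<in> I \<and> z \<notin> I)"
  shows "toggle x S = (R \<inter> insert x T) \<union> (I - insert x T)"
proof -
  have ic: "interval_closed S" using SIC unfolding IC_def by simp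
  show ?thesis
  proof (cases "x \<in> I")
    case True
    then have xS: "x \<in> S" using S xT by auto
    have tg: "toggle x S = (if S - {x} \<in> IC then S - {x} else S)"
    proof -
      have "(S - {x}) \<union> ({x} - S) = S - {x}" using xS by auto
      then show ?thesis unfolding toggle_def Let_def by simp
    qed
    show ?thesis
    proof (cases "x \<in> R")
      case True
      then obtain a b where ab: "a \<in> I" "a < x" "b \<in> R" "x < b" using pA \<open>x \<in> I\<close> by auto
      have "a \<in> S - {x}" using ab dn S by auto
      moreover have "b \<in> S - {x}" using ab up S by auto
      ultimately have "S - {x} \<notin> IC" using ab unfolding IC_def interval_closed_def
        by (auto intro: less_imp_le)
      then show ?thesis using tg S True \<open>x \<in> I\<close> by auto
    next
      case False
      have "interval_closed (S - {x})"
        unfolding interval_closed_def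
      proof (intro ballI allI impI)
        fix p q z assume pq: "p \<in> S - {x}" "q \<in> S - {x}" "p \<le> z \<and> z \<le> q"
        then have zS: "z \<in> S" using ic unfolding interval_closed_def by blast
        show "z \<in> S - {x}"
        proof (rule ccontr)
          assume "z \<notin> S - {x}"
          then have zx: "z = x" using zS by auto
          then have "p < x" "x < q" using pq by (auto simp: order_le_less)
          then have "p \<in> I" "q \<in> R" using pq dn up S by auto
          then show False using pA \<open>x \<in> I\<close> False \<open>p < x\<close> \<open>x < q\<close> by auto
        qed
      qed
      then show ?thesis using tg S False \<open>x \<in> I\<close> unfolding IC_def by auto
    qed
  next
    case False
    then have xS: "x \<notin> S" using S xT by auto
    have tg: "toggle x S = (if insert x S \<in> IC then insert x S else S)"
    proof -
      have "(S - {x}) \<union> ({x} - S) = insert x S" using xS by auto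
      then show ?thesis unfolding toggle_def Let_def by simp
    qed
    show ?thesis
    proof (cases "x \<in> R")
      case True
      have nW: "\<not> (\<exists>z b. x < z \<and> z \<le> b \<and> b \<in> R \<and> z \<notin> R)"
        and nQ: "\<not> (\<exists>a z. a \<le> z \<and> z < x \<and> a \<in> I \<and> z \<notin> I)" using pB False True by auto
      have "interval_closed (insert x S)"
        unfolding interval_closed_def
      proof (intro ballI allI impI)
        fix p q z assume pq: "p \<in> insert x S" "q \<in> insert x S" "p \<le> z \<and> z \<le> q"
        show "z \<in> insert x S"
        proof (cases "z = x")
          case True then show ?thesis by simp
        next
          case zx: False
          show ?thesis
          proof (cases "p \<in> S \<and> q \<in> S")
            case True then show ?thesis using ic pq unfolding interval_closed_def by blast
          next
            case False
            show ?thesis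
            proof (cases "p = x")
              case True
              then have xz: "x < z" using pq zx by (auto simp: order_le_less)
              then have zq: "x < q" using pq order_less_le_trans by blast
              then have "q \<in> S" using pq by auto
              then have "q \<in> R" using zq up S by auto
              then have "z \<in> R" using nW xz pq by blast
              then show ?thesis using S up xz by auto
            next
              case pnx: False
              then have pS: "p \<in> S" using pq by auto
              then have qx: "q = x" using False pq by auto
              then have zx': "z < x" using pq zx by (auto simp: order_le_less)
              then have px: "p < x" using pq order_le_less_trans by blast
              then have "p \<in> I" using pS dn S by auto
              then have "z \<in> I" using nQ zx' pq by blast
              then show ?thesis using S dn zx' by auto
            qed
          qed
        qed
      qed
      then show ?thesis using tg S False True unfolding IC_def by auto
    next
      case xR: False
      have "insert x S \<notin> IC"
      proof
        assume "insert x S \<in> IC"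
        then have ic2: "interval_closed (insert x S)" unfolding IC_def by simp
        have "(\<exists>z b. x < z \<and> z \<le> b \<and> b \<in> R \<and> z \<notin> R) \<or> (\<exists>a z. a \<le> z \<and> z < x \<and> a \<in> I \<and> z \<notin> I)"
          using pB False xR by auto
        then show False
        proof
          assume "\<exists>z b. x < z \<and> z \<le> b \<and> b \<in> R \<and> z \<notin> R"
          then obtain z b where zb: "x < z" "z \<le> b" "b \<in> R" "z \<notin> R" by auto
          have "b \<in> S" using zb up S order_less_le_trans by blast
          moreover have "z \<notin> insert x S" using zb up S by auto
          ultimately show False using ic2 zb unfolding interval_closed_def by (meson insertI1 insertI2 less_imp_le)
        next
          assume "\<exists>a z. a \<le> z \<and> z < x \<and> a \<in> I \<and> z \<notin> I"
          then obtain a z where az: "a \<le> z" "z < x" "a \<in> I" "z \<notin> I" by auto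
          have "a < x" using az order_le_less_trans by blast
          then have "a \<in> S" using az dn S by auto
          moreover have "z \<notin> insert x S" using az dn S by auto
          ultimately show False using ic2 az unfolding interval_closed_def by (meson insertI1 insertI2 less_imp_le)
        qed
      qed
      then show ?thesis using tg S False xR by auto
    qed
  qed
qed

lemma toggle_IC: "S \<in> IC \<Longrightarrow> toggle x S \<in> IC"
  unfolding toggle_def Let_def by auto

fun good :: "('a::order) list \<Rightarrow> bool" where
  "good [] = True"
| "good (x # zs) = (x \<notin> set zs \<and> (\<forall>y. x < y \<longrightarrow> y \<in> set zs) \<and> (\<forall>y\<in>set zs. \<not> y < x) \<and> good zs)"

lemma good_suffix:
  "distinct (ps @ ys) \<Longrightarrow> set (ps @ ys) = UNIV \<Longrightarrow> sorted_wrt (\<lambda>a b. \<not> b < a) (ps @ ys) \<Longrightarrow> good ys"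
proof (induction ys arbitrary: ps)
  case Nil then show ?case by simp
next
  case (Cons x zs)
  have IH: "good zs" using Cons.IH[of "ps @ [x]"] Cons.prems by simp
  have up: "\<forall>y. x < y \<longrightarrow> y \<in> set zs"
  proof (intro allI impI)
    fix y assume xy: "x < y"
    have "y \<in> set (ps @ x # zs)" using Cons.prems(2) by simp
    moreover have "y \<notin> set ps" using Cons.prems(3) xy by (auto simp: sorted_wrt_append)
    moreover have "y \<noteq> x" using xy by simp
    ultimately show "y \<in> set zs" by simp
  qed
  then show ?case using IH Cons.prems by (auto simp: sorted_wrt_append)
qed

lemma lin_iff: "linear_extension xs \<longleftrightarrow> distinct xs \<and> set xs = UNIV \<and> sorted_wrt (\<lambda>a b. \<not> b < a) xs"
proof -
  have "(\<forall>i<length xs. \<forall>j<length xs. xs ! i < xs ! j \<longrightarrow> i < j) \<longleftrightarrow> sorted_wrt (\<lambda>a b. \<not> b < a) xs"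
    unfolding sorted_wrt_iff_nth_less
  proof (intro iffI allI impI)
    fix i j assume h: "\<forall>i<length xs. \<forall>j<length xs. xs ! i < xs ! j \<longrightarrow> i < j" "i < j" "j < length xs"
    show "\<not> xs ! j < xs ! i"
    proof
      assume "xs ! j < xs ! i"
      then have "j < i" using h by auto
      then show False using h(2) by simp
    qed
  next
    fix i j assume h: "\<forall>i j. i < j \<longrightarrow> j < length xs \<longrightarrow> \<not> xs ! j < xs ! i"
      "i < length xs" "j < length xs" "xs ! i < xs ! j"
    show "i < j"
    proof (rule ccontr)
      assume "\<not> i < j"
      then have "j < i \<or> i = j" by auto
      then show False using h by auto
    qed
  qed
  then show ?thesis unfolding linear_extension_def by simp
qed

lemma ex_sorted: "finite (A::('a::order) set) \<Longrightarrow> \<exists>xs. distinct xs \<and> set xs = A \<and> sorted_wrt (\<lambda>a b. \<not> b < a) xs"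
proof (induction "card A" arbitrary: A)
  case 0 then show ?case by auto
next
  case (Suc n)
  then have ne: "A \<noteq> {}" by auto
  obtain m where m: "m \<in> A" "\<forall>b\<in>A. b \<le> m \<longrightarrow> b = m"
    using finite_has_minimal[OF Suc.prems ne] by blast
  obtain xs where xs: "distinct xs" "set xs = A - {m}" "sorted_wrt (\<lambda>a b. \<not> b < a) xs"
  proof -
    have "card (A - {m}) = n" using Suc.hyps(2) m(1) Suc.prems by simp
    then show ?thesis using Suc.hyps(1)[of "A - {m}"] Suc.prems that by auto
  qed
  have "\<forall>y\<in>set xs. \<not> y < m" using xs(2) m(2) by (auto simp: order_le_less)
  then show ?case using xs m(1) by (intro exI[of _ "m # xs"]) auto
qed

lemma ex_lin: "\<exists>xs::('a::{order,finite}) list. linear_extension xs"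
  using ex_sorted[of "UNIV :: 'a set"] lin_iff by auto

lemma lin_good: "linear_extension xs \<Longrightarrow> good xs"
  using good_suffix[of "[]" xs] lin_iff by auto

lemma foldr_main:
  fixes R :: "('a::order) set"
  assumes IIC: "I \<in> IC"
    and pA: "\<And>x. x \<in> I \<Longrightarrow> x \<in> R \<longleftrightarrow> (\<exists>a\<in>I. a < x) \<and> (\<exists>b\<in>R. x < b)"
    and pB: "\<And>x. x \<notin> I \<Longrightarrow> x \<in> R \<longleftrightarrow> \<not> (\<exists>z b. x < z \<and> z \<le> b \<and> b \<in> R \<and> z \<notin> R)
       \<and> \<not> (\<exists>a z. a \<le> z \<and> z < x \<and> a \<in> I \<and> z \<notin> I)"
    and step: "\<And>x T S. x \<notin> T \<Longrightarrow> \<forall>y. x < y \<longrightarrow> y \<in> T \<Longrightarrow> \<forall>y\<in>T. \<not> y < x \<Longrightarrow>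
       S = (R \<inter> T) \<union> (I - T) \<Longrightarrow> S \<in> IC \<Longrightarrow> toggle x S = (R \<inter> insert x T) \<union> (I - insert x T)"
  shows "good ys \<Longrightarrow> foldr toggle ys I = (R \<inter> set ys) \<union> (I - set ys) \<and> foldr toggle ys I \<in> IC"
proof (induction ys)
  case Nil then show ?case using IIC by simp
next
  case (Cons x zs)
  then have h: "foldr toggle zs I = (R \<inter> set zs) \<union> (I - set zs)" "foldr toggle zs I \<in> IC" by auto
  have "toggle x (foldr toggle zs I) = (R \<inter> insert x (set zs)) \<union> (I - insert x (set zs))"
    using step[OF _ _ _ h] Cons.prems by auto
  moreover have "toggle x (foldr toggle zs I) \<in> IC" using toggle_IC[OF h(2)] .
  ultimately show ?case by simp
qed

theorem theorem2p15:
  fixes I :: "('a::{order,finite}) set"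
  assumes "I \<in> IC"
  shows "rowmotion I =
    Inc I
    \<union> (down_closure (Inc_in I (ceiling_ic I)) - (I \<union> down_closure (ceiling_ic I)))
    \<union> (down_closure (ceiling_ic I) - down_closure (minimals I \<inter> down_closure (ceiling_ic I)))"
proof -
  have ic: "interval_closed I" using assms unfolding IC_def by simp
  define xs where "xs = (SOME xs::'a list. linear_extension xs)"
  have lin: "linear_extension xs" unfolding xs_def using someI_ex[OF ex_lin] .
  have g: "good xs" using lin_good[OF lin] .
  have st: "set xs = UNIV" using lin unfolding linear_extension_def by simp
  have "foldr toggle xs I = (Rset I \<inter> set xs) \<union> (I - set xs) \<and> foldr toggle xs I \<in> IC"
  proof (rule foldr_main[OF assms _ _ _ g])
    fix x assume "x \<in> I" then show "x \<in> Rset I \<longleftrightarrow> (\<exists>a\<in>I. a < x) \<and> (\<exists>b\<in>Rset I. x < b)"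
      by (rule propA[OF ic])
  next
    fix x assume "x \<notin> I" then show "x \<in> Rset I \<longleftrightarrow> \<not> (\<exists>z b. x < z \<and> z \<le> b \<and> b \<in> Rset I \<and> z \<notin> Rset I)
       \<and> \<not> (\<exists>a z. a \<le> z \<and> z < x \<and> a \<in> I \<and> z \<notin> I)"
      by (rule propB[OF ic])
  next
    fix x T S assume "x \<notin> T" "\<forall>y. x < y \<longrightarrow> y \<in> T" "\<forall>y\<in>T. \<not> y < x"
       "S = (Rset I \<inter> T) \<union> (I - T)" "S \<in> IC"
    then show "toggle x S = (Rset I \<inter> insert x T) \<union> (I - insert x T)"
      by (rule step[OF _ _ _ _ _ propA[OF ic] propB[OF ic]])
  qed
  then have "foldr toggle xs I = Rset I" using st by simp
  then show ?thesis unfolding rowmotion_def xs_def[symmetric] Rset_def by simp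
qed

end
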